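(* Let $n \ge 3$ and let $\mathbf{Y}_1^A,\dots,\mathbf{Y}_{N_A}^A \in \mathbb{R}^n$ be the observed sample vectors of the $N_A$ variables (voxels) of a region $A$, none of them constant. For $i,i'\in\{1,\dots,N_A\}$ let $r^{A,A}_{i,i'} = \widehat{Cor}(\mathbf{Y}_i^A,\mathbf{Y}_{i'}^A)$ denote their sample Pearson correlation, and let $\mathbf{U}_1^A,\dots,\mathbf{U}_{N_A}^A$ be their U-scores. Apply agglomerative hierarchical clustering with Ward's linkage to the U-scores $\mathbf{U}_1^A,\dots,\mathbf{U}_{N_A}^A$, and cut the resulting dendrogram at a fixed height $h_A \ge 0$. Then for every cluster $\nu_A$ thus obtained (with $|\nu_A|$ its number of elements, and indices $i,i'$ ranging over the voxels in $\nu_A$), $$1 - \frac{h_A^2}{2} \;\le\; \frac{1}{|\nu_A|^2}\sum_{i,i' \in \nu_A} r^{A,A}_{i,i'} \;\le\; 1 .$$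
   Context: Sample correlation: for $\mathbf{a},\mathbf{b}\in\mathbb{R}^n$ with means $\bar a,\bar b$, let $\mathbf{a}^c=\mathbf{a}-\bar a\mathbf{1}_n$, $\mathbf{b}^c=\mathbf{b}-\bar b\mathbf{1}_n$; $\widehat{Cov}(\mathbf{a},\mathbf{b})=n^{-1}\langle\mathbf{a}^c,\mathbf{b}^c\rangle$, $\widehat{Var}(\mathbf{a})=n^{-1}\|\mathbf{a}^c\|^2$, $\widehat{Cor}(\mathbf{a},\mathbf{b})=\widehat{Cov}(\mathbf{a},\mathbf{b})/\sqrt{\widehat{Var}(\mathbf{a})\widehat{Var}(\mathbf{b})}$. U-scores: the U-score of $\mathbf{Y}_i^A$ is $\mathbf{U}_i^A=\mathbf{H}^T\mathbf{Z}_i^A\in\mathbb{R}^{n-1}$, where $\mathbf{Z}_i^A$ is the standardized (centered and normalized to unit Euclidean norm) version of $\mathbf{Y}_i^A$ and $\mathbf{H}$ is a fixed matrix with orthonormal columns spanning the orthogonal complement of $\mathbf{1}_n$ (obtained by Gram–Schmidt); U-scores lie on the unit sphere and satisfy $\widehat{Cor}(\mathbf{Y}_i,\mathbf{Y}_j)=\mathbf{U}_i^T\mathbf{U}_j = 1-\|\mathbf{U}_i-\mathbf{U}_j\|^2/2$. Ward's linkage: the distance between two clusters $\nu_1,\nu_2$ of U-scores is $D(\nu_1,\nu_2)=\sqrt{\frac{2|\nu_1||\nu_2|}{|\nu_1|+|\nu_2|}\,\|\overline{\mathbf{U}}^{\nu_1}-\overline{\mathbf{U}}^{\nu_2}\|^2}$,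 where $\overline{\mathbf{U}}^{\nu}$ is the centroid of cluster $\nu$; agglomerative clustering repeatedly merges the two clusters at smallest linkage distance, and cutting the dendrogram at height $h_A$ means retaining only merges performed at heights at most $h_A$, yielding the clusters. *)

theory Defs
  imports Complex_Main
begin

text \<open>Vectors in R^n are represented as functions nat => real, only indices j < n matter.
  Sample vectors: Y i j = j-th observation of voxel i (i < N, j < n).\<close>

definition smean :: "nat \<Rightarrow> (nat \<Rightarrow> real) \<Rightarrow> real" where
  "smean n a = (\<Sum>j<n. a j) / real n"

definition scenter :: "nat \<Rightarrow> (nat \<Rightarrow> real) \<Rightarrow> nat \<Rightarrow> real" where
  "scenter n a = (\<lambda>j. a j - smean n a)"

definition scov :: "nat \<Rightarrow> (nat \<Rightarrow> real) \<Rightarrow> (nat \<Rightarrow> real) \<Rightarrow> real" where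
  "scov n a b = (\<Sum>j<n. scenter n a j * scenter n b j) / real n"

definition svar :: "nat \<Rightarrow> (nat \<Rightarrow> real) \<Rightarrow> real" where
  "svar n a = (\<Sum>j<n. (scenter n a j)^2) / real n"

definition scor :: "nat \<Rightarrow> (nat \<Rightarrow> real) \<Rightarrow> (nat \<Rightarrow> real) \<Rightarrow> real" where
  "scor n a b = scov n a b / sqrt (svar n a * svar n b)"

definition standardize :: "nat \<Rightarrow> (nat \<Rightarrow> real) \<Rightarrow> nat \<Rightarrow> real" where
  "standardize n a = (\<lambda>j. scenter n a j / sqrt (\<Sum>j'<n. (scenter n a j')^2))"

definition is_U_basis :: "nat \<Rightarrow> (nat \<Rightarrow> nat \<Rightarrow> real) \<Rightarrow> bool" where
  "is_U_basis n H \<longleftrightarrow>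
     (\<forall>k<n-1. \<forall>l<n-1. (\<Sum>j<n. H j k * H j l) = (if k = l then 1 else 0)) \<and>
     (\<forall>k<n-1. (\<Sum>j<n. H j k) = 0) \<and>
     (\<forall>v. (\<Sum>j<n. v j) = 0 \<longrightarrow> (\<exists>c. \<forall>j<n. v j = (\<Sum>k<n-1. c k * H j k)))"

definition uscore :: "nat \<Rightarrow> (nat \<Rightarrow> nat \<Rightarrow> real) \<Rightarrow> (nat \<Rightarrow> real) \<Rightarrow> nat \<Rightarrow> real" where
  "uscore n H a = (\<lambda>k. if k < n - 1 then (\<Sum>j<n. H j k * standardize n a j) else 0)"

definition sqnorm :: "nat \<Rightarrow> (nat \<Rightarrow> real) \<Rightarrow> real" where
  "sqnorm d v = (\<Sum>k<d. (v k)^2)"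

definition centroid :: "(nat \<Rightarrow> nat \<Rightarrow> real) \<Rightarrow> nat set \<Rightarrow> nat \<Rightarrow> real" where
  "centroid U c = (\<lambda>k. (\<Sum>i\<in>c. U i k) / real (card c))"

definition ward_dist :: "nat \<Rightarrow> (nat \<Rightarrow> nat \<Rightarrow> real) \<Rightarrow> nat set \<Rightarrow> nat set \<Rightarrow> real" where
  "ward_dist d U c1 c2 =
     sqrt (2 * real (card c1) * real (card c2) / real (card c1 + card c2)
           * sqnorm d (\<lambda>k. centroid U c1 k - centroid U c2 k))"

text \<open>One agglomerative step: merge two distinct clusters of P at minimal linkage
  (ties broken arbitrarily), the merge height being that linkage.\<close>
definition ward_step :: "nat \<Rightarrow> (nat \<Rightarrow> nat \<Rightarrow> real) \<Rightarrow> nat set set \<Rightarrow> nat set set \<Rightarrow> real \<Rightarrow> bool" where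
  "ward_step d U P P' h \<longleftrightarrow>
     (\<exists>c1 c2. c1 \<in> P \<and> c2 \<in> P \<and> c1 \<noteq> c2 \<and>
        (\<forall>a\<in>P. \<forall>b\<in>P. a \<noteq> b \<longrightarrow> ward_dist d U c1 c2 \<le> ward_dist d U a b) \<and>
        P' = insert (c1 \<union> c2) (P - {c1, c2}) \<and>
        h = ward_dist d U c1 c2)"

text \<open>A full Ward dendrogram of N points: Ps k is the partition of {0..<N} after k merges,
  hs k is the height of the (k+1)-th merge.\<close>
definition ward_dendrogram :: "nat \<Rightarrow> (nat \<Rightarrow> nat \<Rightarrow> real) \<Rightarrow> nat \<Rightarrow> (nat \<Rightarrow> nat set set) \<Rightarrow> (nat \<Rightarrow> real) \<Rightarrow> bool" where
  "ward_dendrogram d U N Ps hs \<longleftrightarrow>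
     Ps 0 = {{i} | i. i < N} \<and>
     (\<forall>k < N - 1. ward_step d U (Ps k) (Ps (Suc k)) (hs k))"

text \<open>Cutting at height h: perform the merges in order as long as their heights are at most h.\<close>
definition ward_cut :: "nat \<Rightarrow> (nat \<Rightarrow> nat set set) \<Rightarrow> (nat \<Rightarrow> real) \<Rightarrow> real \<Rightarrow> nat set set" where
  "ward_cut N Ps hs h = Ps (GREATEST k. k \<le> N - 1 \<and> (\<forall>j<k. hs j \<le> h))"

end

theory Submission
  imports Defs
begin

definition clS :: "(nat \<Rightarrow> nat \<Rightarrow> real) \<Rightarrow> nat set \<Rightarrow> nat \<Rightarrow> real" where
  "clS U c = (\<lambda>k. \<Sum>i\<in>c. U i k)"

definition clF :: "nat \<Rightarrow> (nat \<Rightarrow> nat \<Rightarrow> real) \<Rightarrow> nat set \<Rightarrow> real" where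
  "clF d U c = real (card c) - sqnorm d (clS U c) / real (card c)"

lemma pointwise_id:
  fixes x y a b :: real
  assumes "a > 0" "b > 0"
  shows "x^2/a + y^2/b - (x+y)^2/(a+b) = a*b/(a+b) * (x/a - y/b)^2"
proof -
  have "a \<noteq> 0" "b \<noteq> 0" "a + b \<noteq> 0" using assms by auto
  then show ?thesis by (simp add: divide_simps power2_eq_square) algebra
qed

lemma merge_F:
  assumes "finite c1" "finite c2" "c1 \<inter> c2 = {}" "c1 \<noteq> {}" "c2 \<noteq> {}"
  shows "clF d U (c1 \<union> c2) = clF d U c1 + clF d U c2 + (ward_dist d U c1 c2)^2 / 2"
proof -
  define a where "a = real (card c1)"
  define b where "b = real (card c2)"
  have a: "a > 0" using assms by (simp add: a_def card_gt_0_iff)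
  have b: "b > 0" using assms by (simp add: b_def card_gt_0_iff)
  have cu: "real (card (c1 \<union> c2)) = a + b"
    using assms by (simp add: card_Un_disjoint a_def b_def)
  have su: "clS U (c1 \<union> c2) k = clS U c1 k + clS U c2 k" for k
    using assms by (simp add: clS_def sum.union_disjoint)
  have cen: "centroid U c k = clS U c k / real (card c)" for c k
    by (simp add: centroid_def clS_def)
  have nn: "0 \<le> 2 * a * b / (a + b) * sqnorm d (\<lambda>k. clS U c1 k / a - clS U c2 k / b)"
    using a b by (simp add: sqnorm_def sum_nonneg)
  have wd: "(ward_dist d U c1 c2)^2 = 2 * a * b / (a + b) * sqnorm d (\<lambda>k. clS U c1 k / a - clS U c2 k / b)"
    unfolding ward_dist_def cen a_def[symmetric] b_def[symmetric]
    using nn a_def b_def by (simp add: a_def b_def)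
  have key: "sqnorm d (clS U c1) / a + sqnorm d (clS U c2) / b - sqnorm d (clS U (c1 \<union> c2)) / (a+b)
      = a * b / (a + b) * sqnorm d (\<lambda>k. clS U c1 k / a - clS U c2 k / b)"
    unfolding sqnorm_def su sum_divide_distrib sum_distrib_left sum_subtractf[symmetric] sum.distrib[symmetric]
    by (rule sum.cong) (auto simp: pointwise_id[OF a b])
  show ?thesis
  proof -
    have e: "2 * a * b / (a + b) * sqnorm d (\<lambda>k. clS U c1 k / a - clS U c2 k / b) / 2
      = a * b / (a + b) * sqnorm d (\<lambda>k. clS U c1 k / a - clS U c2 k / b)" using a b by (simp add: field_simps)
    show ?thesis
      unfolding clF_def cu a_def[symmetric] b_def[symmetric] wd e using key by linarith
  qed
qed

definition winv :: "nat \<Rightarrow> (nat \<Rightarrow> nat \<Rightarrow> real) \<Rightarrow> nat \<Rightarrow> real \<Rightarrow> nat set set \<Rightarrow> bool" where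
  "winv d U N h P \<longleftrightarrow> (\<forall>c\<in>P. finite c \<and> c \<noteq> {} \<and> c \<subseteq> {..<N} \<and> 0 \<le> clF d U c \<and>
      clF d U c \<le> (real (card c) - 1) * h^2 / 2) \<and> (\<forall>a\<in>P. \<forall>b\<in>P. a \<noteq> b \<longrightarrow> a \<inter> b = {})"

lemma ward_inv:
  assumes dend: "ward_dendrogram d U N Ps hs" and unit: "\<forall>i<N. sqnorm d (U i) = 1" and h: "h \<ge> 0"
  shows "k \<le> N - 1 \<Longrightarrow> (\<forall>j<k. hs j \<le> h) \<Longrightarrow> winv d U N h (Ps k)"
proof (induction k)
  case 0
  have "Ps 0 = {{i} | i. i < N}" using dend by (simp add: ward_dendrogram_def)
  moreover have "clF d U {i} = 0" if "i < N" for i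
    using unit that by (simp add: clF_def clS_def)
  ultimately show ?case by (auto simp: winv_def)
next
  case (Suc k)
  have IH: "winv d U N h (Ps k)" using Suc.IH Suc.prems by simp
  have "k < N - 1" using Suc.prems(1) by simp
  then have st: "ward_step d U (Ps k) (Ps (Suc k)) (hs k)" using dend by (simp add: ward_dendrogram_def)
  have hk: "hs k \<le> h" using Suc.prems(2) by simp
  from st obtain c1 c2 where cc: "c1 \<in> Ps k \<and> c2 \<in> Ps k \<and> c1 \<noteq> c2 \<and>
        (\<forall>a\<in>Ps k. \<forall>b\<in>Ps k. a \<noteq> b \<longrightarrow> ward_dist d U c1 c2 \<le> ward_dist d U a b) \<and>
        Ps (Suc k) = insert (c1 \<union> c2) (Ps k - {c1, c2}) \<and>
        hs k = ward_dist d U c1 c2"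
    unfolding ward_step_def by (elim exE) (erule that)
  have c: "c1 \<in> Ps k" "c2 \<in> Ps k" "c1 \<noteq> c2" using cc by simp_all
  have P': "Ps (Suc k) = insert (c1 \<union> c2) (Ps k - {c1, c2})" using cc by simp
  have hd: "hs k = ward_dist d U c1 c2" using cc by simp
  have dj: "c1 \<inter> c2 = {}" using IH c by (auto simp: winv_def)
  have f1: "finite c1" "c1 \<noteq> {}" "c1 \<subseteq> {..<N}" "0 \<le> clF d U c1" "clF d U c1 \<le> (real (card c1) - 1) * h^2 / 2"
    using IH c by (auto simp: winv_def)
  have f2: "finite c2" "c2 \<noteq> {}" "c2 \<subseteq> {..<N}" "0 \<le> clF d U c2" "clF d U c2 \<le> (real (card c2) - 1) * h^2 / 2"
    using IH c by (auto simp: winv_def)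
  have sq0: "0 \<le> sqnorm d (\<lambda>k. centroid U c1 k - centroid U c2 k)" by (simp add: sqnorm_def sum_nonneg)
  have wnn: "0 \<le> ward_dist d U c1 c2" unfolding ward_dist_def
    by (intro real_sqrt_ge_zero mult_nonneg_nonneg divide_nonneg_nonneg sq0) simp_all
  have wh: "(ward_dist d U c1 c2)^2 \<le> h^2" using hk hd wnn by (simp add: power_mono)
  have m: "clF d U (c1 \<union> c2) = clF d U c1 + clF d U c2 + (ward_dist d U c1 c2)^2 / 2"
    using merge_F[OF f1(1) f2(1) dj f1(2) f2(2)] .
  have cu: "real (card (c1 \<union> c2)) = real (card c1) + real (card c2)"
    using f1 f2 dj by (simp add: card_Un_disjoint)
  have new: "0 \<le> clF d U (c1 \<union> c2) \<and> clF d U (c1 \<union> c2) \<le> (real (card (c1 \<union> c2)) - 1) * h^2 / 2"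
  proof -
    have w0: "0 \<le> (ward_dist d U c1 c2)^2" by simp
    have e: "(real (card c1) + real (card c2) - 1) * h^2 / 2 = (real (card c1) - 1) * h^2 / 2 + (real (card c2) - 1) * h^2 / 2 + h^2 / 2"
      by (simp add: field_simps)
    show ?thesis unfolding m cu e using f1(4,5) f2(4,5) wh w0 by linarith
  qed
  show ?case
    unfolding P' winv_def
  proof (intro conjI)
    show "\<forall>c\<in>insert (c1 \<union> c2) (Ps k - {c1, c2}). finite c \<and> c \<noteq> {} \<and> c \<subseteq> {..<N} \<and> 0 \<le> clF d U c \<and>
      clF d U c \<le> (real (card c) - 1) * h^2 / 2"
      using new f1 f2 IH by (auto simp: winv_def)
    show "\<forall>a\<in>insert (c1 \<union> c2) (Ps k - {c1, c2}). \<forall>b\<in>insert (c1 \<union> c2) (Ps k - {c1, c2}). a \<noteq> b \<longrightarrow> a \<inter> b = {}"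
      using IH c unfolding winv_def by blast
  qed
qed

lemma uscore_inner:
  assumes U: "is_U_basis n H" and z: "(\<Sum>j<n. Za j) = 0"
  shows "(\<Sum>k<n-1. (\<Sum>j<n. H j k * Za j) * (\<Sum>j<n. H j k * Zb j)) = (\<Sum>j<n. Za j * Zb j)"
proof -
  obtain c where c: "\<forall>j<n. Za j = (\<Sum>k<n-1. c k * H j k)"
    using U z unfolding is_U_basis_def by blast
  have u: "(\<Sum>j<n. H j k * Za j) = c k" if k: "k < n - 1" for k
  proof -
    have "(\<Sum>j<n. H j k * Za j) = (\<Sum>j<n. H j k * (\<Sum>l<n-1. c l * H j l))"
      using c by (intro sum.cong) auto
    also have "\<dots> = (\<Sum>l<n-1. c l * (\<Sum>j<n. H j k * H j l))"
      unfolding sum_distrib_left by (subst sum.swap) (simp add: mult_ac)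
    also have "\<dots> = (\<Sum>l<n-1. c l * (if k = l then 1 else 0))"
      using U k unfolding is_U_basis_def by (intro sum.cong) auto
    also have "\<dots> = c k" using k by (simp add: if_distrib cong: if_cong)
    finally show ?thesis .
  qed
  have "(\<Sum>k<n-1. (\<Sum>j<n. H j k * Za j) * (\<Sum>j<n. H j k * Zb j))
      = (\<Sum>k<n-1. c k * (\<Sum>j<n. H j k * Zb j))"
    using u by (intro sum.cong) auto
  also have "\<dots> = (\<Sum>j<n. Zb j * (\<Sum>k<n-1. c k * H j k))"
    unfolding sum_distrib_left by (subst sum.swap) (simp add: mult_ac)
  also have "\<dots> = (\<Sum>j<n. Za j * Zb j)"
    using c by (intro sum.cong) auto
  finally show ?thesis .
qed

lemma scenter_sum: assumes "n > 0" shows "(\<Sum>j<n. scenter n a j) = 0"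
  using assms by (simp add: scenter_def smean_def sum_subtractf)

lemma scenter_pos:
  assumes "n > 0" "\<exists>j<n. \<exists>j'<n. a j \<noteq> a j'"
  shows "(\<Sum>j<n. (scenter n a j)^2) > 0"
proof (rule ccontr)
  assume "\<not> ?thesis"
  then have "(\<Sum>j<n. (scenter n a j)^2) = 0"
    by (metis (no_types, lifting) linorder_not_less order_antisym sum_nonneg zero_le_power2)
  then have "\<forall>j\<in>{..<n}. (scenter n a j)^2 = 0"
    by (subst (asm) sum_nonneg_eq_0_iff) auto
  then have "\<forall>j<n. a j = smean n a" by (simp add: scenter_def)
  then show False using assms by metis
qed

lemma scor_uscore:
  assumes U: "is_U_basis n H" and n: "n > 0"
    and a: "\<exists>j<n. \<exists>j'<n. a j \<noteq> a j'" and b: "\<exists>j<n. \<exists>j'<n. b j \<noteq> b j'"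
  shows "scor n a b = (\<Sum>k<n-1. uscore n H a k * uscore n H b k)"
proof -
  define A where "A = (\<Sum>j<n. (scenter n a j)^2)"
  define B where "B = (\<Sum>j<n. (scenter n b j)^2)"
  have A: "A > 0" using scenter_pos[OF n a] by (simp add: A_def)
  have B: "B > 0" using scenter_pos[OF n b] by (simp add: B_def)
  have z: "(\<Sum>j<n. standardize n a j) = 0"
    unfolding standardize_def sum_divide_distrib[symmetric] using scenter_sum[OF n] by simp
  have "(\<Sum>k<n-1. uscore n H a k * uscore n H b k)
      = (\<Sum>k<n-1. (\<Sum>j<n. H j k * standardize n a j) * (\<Sum>j<n. H j k * standardize n b j))"
    by (intro sum.cong) (auto simp: uscore_def)
  also have "\<dots> = (\<Sum>j<n. standardize n a j * standardize n b j)"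
    by (rule uscore_inner[OF U z])
  also have "\<dots> = (\<Sum>j<n. scenter n a j * scenter n b j) / (sqrt A * sqrt B)"
    unfolding standardize_def A_def[symmetric] B_def[symmetric] sum_divide_distrib
    by (intro sum.cong) auto
  also have "\<dots> = scor n a b"
  proof -
    have "sqrt (A / real n * (B / real n)) = sqrt A * sqrt B / real n"
      using n by (simp add: real_sqrt_mult real_sqrt_divide)
    then show ?thesis
      unfolding scor_def scov_def svar_def A_def[symmetric] B_def[symmetric]
      using n A B by (simp add: field_simps)
  qed
  finally show ?thesis by simp
qed
lemma scor_self:
  assumes "n > 0" "\<exists>j<n. \<exists>j'<n. a j \<noteq> a j'"
  shows "scor n a a = 1"
proof -
  have A: "(\<Sum>j<n. (scenter n a j)^2) > 0" using scenter_pos[OF assms] .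
  have "svar n a > 0" using A assms(1) by (simp add: svar_def)
  moreover have "scov n a a = svar n a" by (simp add: scov_def svar_def power2_eq_square)
  ultimately show ?thesis by (simp add: scor_def)
qed

theorem theorem1:
  fixes n N :: nat and Y :: "nat \<Rightarrow> nat \<Rightarrow> real" and H :: "nat \<Rightarrow> nat \<Rightarrow> real"
    and Ps :: "nat \<Rightarrow> nat set set" and hs :: "nat \<Rightarrow> real" and hA :: real and \<nu> :: "nat set"
  assumes "n \<ge> 3"
    and "\<forall>i<N. \<exists>j<n. \<exists>j'<n. Y i j \<noteq> Y i j'"
    and "is_U_basis n H"
    and "ward_dendrogram (n - 1) (\<lambda>i. uscore n H (Y i)) N Ps hs"
    and "hA \<ge> 0"
    and "\<nu> \<in> ward_cut N Ps hs hA"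
  shows "1 - hA^2 / 2 \<le> (\<Sum>i\<in>\<nu>. \<Sum>i'\<in>\<nu>. scor n (Y i) (Y i')) / real (card \<nu>)^2
       \<and> (\<Sum>i\<in>\<nu>. \<Sum>i'\<in>\<nu>. scor n (Y i) (Y i')) / real (card \<nu>)^2 \<le> 1"
proof -
  define U where "U = (\<lambda>i. uscore n H (Y i))"
  have n: "n > 0" using assms(1) by simp
  have cu: "scor n (Y i) (Y i') = (\<Sum>k<n-1. U i k * U i' k)" if "i < N" "i' < N" for i i'
  proof -
    have a: "\<exists>j<n. \<exists>j'<n. Y i j \<noteq> Y i j'" using assms(2) that(1) by blast
    have b: "\<exists>j<n. \<exists>j'<n. Y i' j \<noteq> Y i' j'" using assms(2) that(2) by blast
    show ?thesis unfolding U_def by (rule scor_uscore[OF assms(3) n a b])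
  qed
  have unit: "\<forall>i<N. sqnorm (n-1) (U i) = 1"
  proof (intro allI impI)
    fix i assume i: "i < N"
    have "sqnorm (n-1) (U i) = scor n (Y i) (Y i)"
      using cu[OF i i] by (simp add: sqnorm_def power2_eq_square)
    also have "\<dots> = 1" proof (rule scor_self[OF n])
      show "\<exists>j<n. \<exists>j'<n. Y i j \<noteq> Y i j'" using assms(2) i by blast
    qed
    finally show "sqnorm (n-1) (U i) = 1" .
  qed
  define K where "K = (GREATEST k. k \<le> N - 1 \<and> (\<forall>j<k. hs j \<le> hA))"
  have PK: "K \<le> N - 1 \<and> (\<forall>j<K. hs j \<le> hA)"
    unfolding K_def by (rule GreatestI_nat[where k = 0 and b = "N - 1"]) auto
  have nuK: "\<nu> \<in> Ps K" using assms(6) by (simp add: ward_cut_def K_def)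
  have inv: "winv (n-1) U N hA (Ps K)"
    using ward_inv[OF assms(4)[folded U_def] unit assms(5)] PK by blast
  then have fin: "finite \<nu>" "\<nu> \<noteq> {}" "\<nu> \<subseteq> {..<N}" "0 \<le> clF (n-1) U \<nu>"
     "clF (n-1) U \<nu> \<le> (real (card \<nu>) - 1) * hA^2 / 2"
    using nuK unfolding winv_def by blast+
  define m where "m = real (card \<nu>)"
  have m: "m \<ge> 1" using fin by (simp add: m_def Suc_leI card_gt_0_iff)
  define Q where "Q = sqnorm (n-1) (clS U \<nu>)"
  have sumQ: "(\<Sum>i\<in>\<nu>. \<Sum>i'\<in>\<nu>. scor n (Y i) (Y i')) = Q"
  proof -
    have "(\<Sum>i\<in>\<nu>. \<Sum>i'\<in>\<nu>. scor n (Y i) (Y i')) = (\<Sum>i\<in>\<nu>. \<Sum>i'\<in>\<nu>. \<Sum>k<n-1. U i k * U i' k)"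
      using fin(3) cu by (intro sum.cong) auto
    also have "\<dots> = (\<Sum>i\<in>\<nu>. \<Sum>k<n-1. \<Sum>i'\<in>\<nu>. U i k * U i' k)"
      by (intro sum.cong refl sum.swap)
    also have "\<dots> = (\<Sum>k<n-1. \<Sum>i\<in>\<nu>. \<Sum>i'\<in>\<nu>. U i k * U i' k)"
      by (rule sum.swap)
    also have "\<dots> = Q"
      unfolding Q_def sqnorm_def clS_def power2_eq_square sum_product by simp
    finally show ?thesis .
  qed
  have F: "clF (n-1) U \<nu> = m - Q / m" by (simp add: clF_def m_def Q_def)
  have Qeq: "Q / m^2 = 1 - clF (n-1) U \<nu> / m"
    using m unfolding F by (simp add: field_simps power2_eq_square)
  have up: "clF (n-1) U \<nu> / m \<ge> 0" using fin(4) m by simp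
  have X: "hA^2 / 2 \<ge> 0" by simp
  have mp: "m > 0" using m by simp
  have "clF (n-1) U \<nu> \<le> hA^2 / 2 * (m - 1)" using fin(5) by (simp add: m_def mult.commute)
  also have "\<dots> \<le> hA^2 / 2 * m" by (rule mult_left_mono[OF _ X]) simp
  finally have "clF (n-1) U \<nu> \<le> hA^2 / 2 * m" .
  then have lo: "clF (n-1) U \<nu> / m \<le> hA^2 / 2" by (subst pos_divide_le_eq[OF mp])
  have eq: "(\<Sum>i\<in>\<nu>. \<Sum>i'\<in>\<nu>. scor n (Y i) (Y i')) / real (card \<nu>)^2 = 1 - clF (n-1) U \<nu> / m"
    unfolding sumQ m_def[symmetric] by (rule Qeq)
  show ?thesis unfolding eq using up lo by linarith
qed

end
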